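(* Let $X,Y$ be finite nonempty sets. Every $A\in\{-1,1\}^{X\times Y}$ satisfies $\|A\|_{\gamma_2}\ge\sqrt{\operatorname{Ldim}(A)}$.
   Context: The $\gamma_2$ factorization norm of a matrix $A$ is $\|A\|_{\gamma_2}=\min_{UV=A}\|U\|_{\mathrm{row}}\|V\|_{\mathrm{col}}$, where the minimum is over all factorizations $A=UV$, $\|U\|_{\mathrm{row}}$ is the largest Euclidean norm of a row of $U$ and $\|V\|_{\mathrm{col}}$ the largest Euclidean norm of a column of $V$. A mistake tree of depth $d$ over $X$ is a complete binary tree of depth $d$ in which each internal node $\nu$ is labelled with $x(\nu)\in X$ and each edge $e$ to a child is labelled with a sign $\sigma(e)\in\{-1,1\}$ ($-1$ for the left child, $+1$ for the right child). $A\in\{-1,1\}^{X\times Y}$ shatters such a tree if for every root-to-leaf path $(\nu_1,\dots,\nu_{d+1})$ there is $y\in Y$ with $A(x(\nu_i),y)=\sigma(\nu_i\nu_{i+1})$ for all $i\in[d]$. The Littlestone dimension $\operatorname{Ldim}(A)$ is the largest $d$ for which $A$ shatters a mistake tree of depth $d$. *)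

theory Defs
  imports Main "HOL.Real" "HOL.NthRoot"
begin

text \<open>Matrices indexed by finite sets X (rows) and Y (columns) are functions
  'a \<Rightarrow> 'b \<Rightarrow> real, only their values on X \<times> Y matter.\<close>

definition row_norm :: "'a set \<Rightarrow> nat \<Rightarrow> ('a \<Rightarrow> nat \<Rightarrow> real) \<Rightarrow> real" where
  "row_norm X k U = Max ((\<lambda>x. sqrt (\<Sum>i<k. (U x i)^2)) ` X)"

definition col_norm :: "'b set \<Rightarrow> nat \<Rightarrow> (nat \<Rightarrow> 'b \<Rightarrow> real) \<Rightarrow> real" where
  "col_norm Y k V = Max ((\<lambda>y. sqrt (\<Sum>i<k. (V i y)^2)) ` Y)"

definition is_factorization ::
  "'a set \<Rightarrow> 'b set \<Rightarrow> ('a \<Rightarrow> 'b \<Rightarrow> real) \<Rightarrow> nat \<Rightarrow> ('a \<Rightarrow> nat \<Rightarrow> real) \<Rightarrow> (nat \<Rightarrow> 'b \<Rightarrow> real) \<Rightarrow> bool" where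
  "is_factorization X Y A k U V \<longleftrightarrow> (\<forall>x\<in>X. \<forall>y\<in>Y. A x y = (\<Sum>i<k. U x i * V i y))"

definition gamma2 :: "'a set \<Rightarrow> 'b set \<Rightarrow> ('a \<Rightarrow> 'b \<Rightarrow> real) \<Rightarrow> real" where
  "gamma2 X Y A = Inf {row_norm X k U * col_norm Y k V | k U V. is_factorization X Y A k U V}"

text \<open>A mistake tree of depth d over X: internal nodes are identified by the sign
  sequence (list over {-1,1}) of the path from the root, of length < d; the label
  function assigns each internal node an element of X. The edge from a node p to
  its child p @ [s] carries the sign s (-1 left, +1 right).\<close>
definition sign_lists :: "nat \<Rightarrow> real list set" where
  "sign_lists n = {s. length s = n \<and> set s \<subseteq> {-1, 1}}"

definition mistake_tree :: "'a set \<Rightarrow> nat \<Rightarrow> (real list \<Rightarrow> 'a) \<Rightarrow> bool" where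
  "mistake_tree X d lab \<longleftrightarrow> (\<forall>n<d. \<forall>p\<in>sign_lists n. lab p \<in> X)"

definition shatters ::
  "'a set \<Rightarrow> 'b set \<Rightarrow> ('a \<Rightarrow> 'b \<Rightarrow> real) \<Rightarrow> nat \<Rightarrow> (real list \<Rightarrow> 'a) \<Rightarrow> bool" where
  "shatters X Y A d lab \<longleftrightarrow>
     (\<forall>s\<in>sign_lists d. \<exists>y\<in>Y. \<forall>i<d. A (lab (take i s)) y = s ! i)"

definition Ldim :: "'a set \<Rightarrow> 'b set \<Rightarrow> ('a \<Rightarrow> 'b \<Rightarrow> real) \<Rightarrow> nat" where
  "Ldim X Y A = (GREATEST d. \<exists>lab. mistake_tree X d lab \<and> shatters X Y A d lab)"

end

theory Submission
  imports Defs "HOL-Analysis.Convex"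
begin

definition wv :: "(real list \<Rightarrow> 'a) \<Rightarrow> ('a \<Rightarrow> nat \<Rightarrow> real) \<Rightarrow> real list \<Rightarrow> nat \<Rightarrow> real" where
  "wv lab U p i = (\<Sum>j<length p. p!j * U (lab (take j p)) i)"

fun pth :: "nat \<Rightarrow> (real list \<Rightarrow> 'a) \<Rightarrow> ('a \<Rightarrow> nat \<Rightarrow> real) \<Rightarrow> nat \<Rightarrow> real list" where
  "pth k lab U 0 = []"
| "pth k lab U (Suc n) = pth k lab U n @
     [if (\<Sum>i<k. wv lab U (pth k lab U n) i * U (lab (pth k lab U n)) i) \<ge> 0 then -1 else 1]"

lemma pth_len: "length (pth k lab U n) = n"
  by (induction n) auto

lemma pth_set: "set (pth k lab U n) \<subseteq> {-1, 1}"
  by (induction n) auto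

lemma pth_take: "j \<le> n \<Longrightarrow> take j (pth k lab U n) = pth k lab U j"
proof (induction n)
  case 0 then show ?case by simp
next
  case (Suc n)
  show ?case
  proof (cases "j = Suc n")
    case True then show ?thesis using pth_len[of k lab U "Suc n"] by simp
  next
    case False
    then have "j \<le> n" using Suc.prems by simp
    then show ?thesis using Suc.IH pth_len[of k lab U n] by simp
  qed
qed

lemma wv_snoc: "wv lab U (p @ [s]) i = wv lab U p i + s * U (lab p) i"
proof -
  have "wv lab U (p @ [s]) i = (\<Sum>j<Suc (length p). (p@[s])!j * U (lab (take j (p@[s]))) i)"
    by (simp add: wv_def)
  also have "\<dots> = (\<Sum>j<length p. (p@[s])!j * U (lab (take j (p@[s]))) i) + s * U (lab p) i"
    by simp
  also have "(\<Sum>j<length p. (p@[s])!j * U (lab (take j (p@[s]))) i) = wv lab U p i"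
    unfolding wv_def by (intro sum.cong) (auto simp: nth_append)
  finally show ?thesis .
qed

lemma row_bound:
  assumes "finite X" "x \<in> X"
  shows "(\<Sum>i<k. (U x i)^2) \<le> (row_norm X k U)^2" (is "?S \<le> _")
proof -
  have "sqrt (\<Sum>i<k. (U x i)^2) \<le> row_norm X k U"
    unfolding row_norm_def using assms by (intro Max_ge) auto
  moreover have nn: "0 \<le> ?S" by (intro sum_nonneg) auto
  ultimately have "(sqrt (\<Sum>i<k. (U x i)^2))^2 \<le> (row_norm X k U)^2"
    by (intro power_mono) auto
  then show ?thesis using nn by simp
qed

lemma col_bound:
  assumes "finite Y" "y \<in> Y"
  shows "(\<Sum>i<k. (V i y)^2) \<le> (col_norm Y k V)^2" (is "?S \<le> _")
proof -
  have "sqrt (\<Sum>i<k. (V i y)^2) \<le> col_norm Y k V"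
    unfolding col_norm_def using assms by (intro Max_ge) auto
  moreover have nn: "0 \<le> ?S" by (intro sum_nonneg) auto
  ultimately have "(sqrt (\<Sum>i<k. (V i y)^2))^2 \<le> (col_norm Y k V)^2"
    by (intro power_mono) auto
  then show ?thesis using nn by simp
qed

lemma row_nonneg:
  assumes "finite X" "x \<in> X" shows "0 \<le> row_norm X k U"
proof -
  have "sqrt (\<Sum>i<k. (U x i)^2) \<le> row_norm X k U"
    unfolding row_norm_def using assms by (intro Max_ge) auto
  moreover have "0 \<le> sqrt (\<Sum>i<k. (U x i)^2)" by (simp add: sum_nonneg)
  ultimately show ?thesis by linarith
qed

lemma col_nonneg:
  assumes "finite Y" "y \<in> Y" shows "0 \<le> col_norm Y k V"
proof -
  have "sqrt (\<Sum>i<k. (V i y)^2) \<le> col_norm Y k V"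
    unfolding col_norm_def using assms by (intro Max_ge) auto
  moreover have "0 \<le> sqrt (\<Sum>i<k. (V i y)^2)" by (simp add: sum_nonneg)
  ultimately show ?thesis by linarith
qed

lemma norm_growth:
  assumes "finite X" "mistake_tree X d lab" "n \<le> d"
  shows "(\<Sum>i<k. (wv lab U (pth k lab U n) i)^2) \<le> real n * (row_norm X k U)^2"
  using assms(3)
proof (induction n)
  case 0 then show ?case by (simp add: wv_def)
next
  case (Suc n)
  define p where "p = pth k lab U n"
  define w where "w = (\<lambda>i. wv lab U p i)"
  define u where "u = U (lab p)"
  define s :: real where "s = (if (\<Sum>i<k. w i * u i) \<ge> 0 then -1 else 1)"
  have pS: "pth k lab U (Suc n) = p @ [s]" by (simp add: p_def s_def w_def u_def)
  have ss: "s * s = 1" by (simp add: s_def)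
  have neg: "s * (\<Sum>i<k. w i * u i) \<le> 0" by (simp add: s_def)
  have "p \<in> sign_lists n" using pth_len pth_set unfolding sign_lists_def p_def by blast
  moreover have "n < d" using Suc.prems by simp
  ultimately have "lab p \<in> X" using assms(2) unfolding mistake_tree_def by blast
  then have ub: "(\<Sum>i<k. (u i)^2) \<le> (row_norm X k U)^2"
    unfolding u_def by (rule row_bound[OF assms(1)])
  have "(\<Sum>i<k. (wv lab U (pth k lab U (Suc n)) i)^2) = (\<Sum>i<k. (w i + s * u i)^2)"
    by (simp only: pS wv_snoc w_def u_def)
  also have "\<dots> = (\<Sum>i<k. (w i)^2 + (2*s)*(w i * u i) + (s*s)*(u i)^2)"
    by (intro sum.cong refl) (simp add: power2_eq_square algebra_simps)
  also have "\<dots> = (\<Sum>i<k. (w i)^2) + (\<Sum>i<k. (2*s)*(w i * u i)) + (\<Sum>i<k. (s*s)*(u i)^2)"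
    by (simp only: sum.distrib)
  also have "\<dots> = (\<Sum>i<k. (w i)^2) + 2 * (s * (\<Sum>i<k. w i * u i)) + (s*s) * (\<Sum>i<k. (u i)^2)"
    by (simp only: sum_distrib_left[symmetric] mult.assoc)
  also have "\<dots> \<le> (\<Sum>i<k. (w i)^2) + (row_norm X k U)^2"
    using neg ub ss by simp
  also have "\<dots> \<le> real n * (row_norm X k U)^2 + (row_norm X k U)^2"
    using Suc by (simp add: w_def p_def)
  finally show ?case by (simp add: algebra_simps)
qed

lemma key:
  assumes "finite X" "X \<noteq> {}" "finite Y" "Y \<noteq> {}"
    and fac: "is_factorization X Y A k U V"
    and mt: "mistake_tree X d lab" and sh: "shatters X Y A d lab"
  shows "sqrt (real d) \<le> row_norm X k U * col_norm Y k V"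
proof -
  define r where "r = row_norm X k U"
  define c where "c = col_norm Y k V"
  obtain x0 where x0: "x0 \<in> X" using assms(2) by blast
  have r0: "0 \<le> r" unfolding r_def by (rule row_nonneg[OF assms(1) x0])
  obtain y0 where y0: "y0 \<in> Y" using assms(4) by blast
  have c0: "0 \<le> c" unfolding c_def by (rule col_nonneg[OF assms(3) y0])
  define s where "s = pth k lab U d"
  have "s \<in> sign_lists d" unfolding sign_lists_def s_def using pth_len pth_set by blast
  then have "\<exists>y\<in>Y. \<forall>i<d. A (lab (take i s)) y = s ! i"
    using sh unfolding shatters_def by (rule bspec[rotated])
  then obtain y where y: "y \<in> Y" and hy: "\<forall>i<d. A (lab (take i s)) y = s ! i"
    by blast
  define w where "w = wv lab U s"
  have lens: "length s = d" using pth_len s_def by simp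
  have sset: "set s \<subseteq> {-1,1}" using pth_set s_def by simp
  have "(\<Sum>i<k. w i * V i y) = (\<Sum>i<k. \<Sum>j<d. s!j * U (lab (take j s)) i * V i y)"
    unfolding w_def wv_def lens by (simp add: sum_distrib_right)
  also have "\<dots> = (\<Sum>j<d. s!j * (\<Sum>i<k. U (lab (take j s)) i * V i y))"
    by (subst sum.swap) (simp add: sum_distrib_left mult.assoc)
  also have "\<dots> = (\<Sum>j<d. s!j * s!j)"
  proof (intro sum.cong refl)
    fix j assume j: "j \<in> {..<d}"
    have "take j s = pth k lab U j" unfolding s_def using j by (intro pth_take) simp
    moreover have "pth k lab U j \<in> sign_lists j"
      using pth_len pth_set unfolding sign_lists_def by blast
    ultimately have "lab (take j s) \<in> X" using mt j unfolding mistake_tree_def by auto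
    then have "(\<Sum>i<k. U (lab (take j s)) i * V i y) = A (lab (take j s)) y"
      using fac y unfolding is_factorization_def by simp
    then show "s!j * (\<Sum>i<k. U (lab (take j s)) i * V i y) = s!j * s!j" using hy j by simp
  qed
  also have "\<dots> = real d"
  proof -
    have "\<And>j. j < d \<Longrightarrow> s!j * s!j = 1"
    proof -
      fix j assume "j < d"
      then have "s!j \<in> {-1,1}" using sset lens nth_mem by blast
      then show "s!j * s!j = 1" by auto
    qed
    then show ?thesis by simp
  qed
  finally have ip: "(\<Sum>i<k. w i * V i y) = real d" .
  have nw: "(\<Sum>i<k. (w i)^2) \<le> real d * r^2"
    using norm_growth[OF assms(1) mt, where n=d and k=k and U=U] unfolding w_def s_def r_def by simp
  have nv: "(\<Sum>i<k. (V i y)^2) \<le> c^2"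
    unfolding c_def by (rule col_bound[OF assms(3) y])
  have "(real d)^2 \<le> (\<Sum>i<k. (w i)^2) * (\<Sum>i<k. (V i y)^2)"
    using Cauchy_Schwarz_ineq_sum[of w "\<lambda>i. V i y" "{..<k}"] ip by simp
  also have "\<dots> \<le> (real d * r^2) * c^2"
    using nw nv by (intro mult_mono) (auto simp: sum_nonneg)
  finally have h: "(real d)^2 \<le> real d * (r * c)^2" by (simp add: power_mult_distrib)
  show ?thesis
  proof (cases "d = 0")
    case True then show ?thesis using r0 c0 r_def c_def by simp
  next
    case False
    then have "real d \<le> (r*c)^2" using h by (simp add: power2_eq_square)
    then have "sqrt (real d) \<le> sqrt ((r*c)^2)" by (rule real_sqrt_le_mono)
    then show ?thesis using r0 c0 r_def c_def by simp
  qed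
qed

lemma shatter_bound:
  assumes "finite Y" and sh: "shatters X Y A d lab"
  shows "d < card Y"
proof -
  have "\<forall>s\<in>sign_lists d. \<exists>y\<in>Y. \<forall>i<d. A (lab (take i s)) y = s ! i"
    using sh unfolding shatters_def by blast
  then obtain g where g: "\<And>s. s \<in> sign_lists d \<Longrightarrow> g s \<in> Y \<and> (\<forall>i<d. A (lab (take i s)) (g s) = s ! i)"
    by metis
  have inj: "inj_on g (sign_lists d)"
  proof (rule inj_onI)
    fix s t assume s: "s \<in> sign_lists d" and t: "t \<in> sign_lists d" and eq: "g s = g t"
    have ls: "length s = d" and lt: "length t = d" using s t by (auto simp: sign_lists_def)
    show "s = t"
    proof (rule nth_equalityI)
      show "length s = length t" using ls lt by simp
      fix i assume "i < length s"
      then show "s!i = t!i"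
      proof (induction i rule: less_induct)
        case (less i)
        have "take i s = take i t"
          using less ls lt by (intro nth_equalityI) auto
        then show ?case using g[OF s] g[OF t] eq less.prems ls by metis
      qed
    qed
  qed
  have cs: "card (sign_lists d) = 2 ^ d"
  proof -
    have "sign_lists d = {xs. set xs \<subseteq> {-1::real,1} \<and> length xs = d}"
      unfolding sign_lists_def by auto
    then show ?thesis using card_lists_length_eq[of "{-1::real,1}" d] by (simp add: numeral_2_eq_2)
  qed
  have "g ` sign_lists d \<subseteq> Y" using g by blast
  then have "card (g ` sign_lists d) \<le> card Y" using assms(1) card_mono by blast
  then have "2 ^ d \<le> card Y" using card_image[OF inj] cs by simp
  moreover have "d < 2 ^ d" by (rule less_exp)
  ultimately show ?thesis by linarith
qed

theorem proposition2p2: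
  fixes X :: "'a set" and Y :: "'b set" and A :: "'a \<Rightarrow> 'b \<Rightarrow> real"
  assumes "finite X" "X \<noteq> {}" "finite Y" "Y \<noteq> {}"
    and "\<forall>x\<in>X. \<forall>y\<in>Y. A x y \<in> {-1, 1}"
  shows "gamma2 X Y A \<ge> sqrt (real (Ldim X Y A))"
proof -
  let ?P = "\<lambda>d. \<exists>lab. mistake_tree X d lab \<and> shatters X Y A d lab"
  have P0: "?P 0"
    using assms(4) unfolding mistake_tree_def shatters_def by auto
  have bd: "\<forall>d. ?P d \<longrightarrow> d \<le> card Y"
    using shatter_bound assms(3) less_imp_le by blast
  have "?P (Ldim X Y A)"
    unfolding Ldim_def by (rule GreatestI_nat[where P="?P", OF P0]) (use bd in auto)
  then obtain lab where mt: "mistake_tree X (Ldim X Y A) lab"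
    and sh: "shatters X Y A (Ldim X Y A) lab" by blast
  define S where "S = {row_norm X k U * col_norm Y k V | k U V. is_factorization X Y A k U V}"
  obtain n :: nat and f where nf: "X = f ` {i. i < n}" "inj_on f {i. i < n}"
    using finite_imp_nat_seg_image_inj_on[OF assms(1)] by blast
  define U0 :: "'a \<Rightarrow> nat \<Rightarrow> real" where "U0 = (\<lambda>x i. if f i = x then 1 else 0)"
  define V0 where "V0 = (\<lambda>i y. A (f i) y)"
  have "is_factorization X Y A n U0 V0"
    unfolding is_factorization_def
  proof (intro ballI)
    fix x y assume x: "x \<in> X" and "y \<in> Y"
    obtain j where j: "j < n" "f j = x" using x nf by auto
    have "(\<Sum>i<n. U0 x i * V0 i y) = (\<Sum>i\<in>{j}. U0 x i * V0 i y)"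
    proof (rule sum.mono_neutral_right)
      show "\<forall>i\<in>{..<n} - {j}. U0 x i * V0 i y = 0"
        using nf(2) j unfolding U0_def inj_on_def by auto
    qed (use j in auto)
    then show "A x y = (\<Sum>i<n. U0 x i * V0 i y)" using j by (simp add: U0_def V0_def)
  qed
  then have ne: "S \<noteq> {}" unfolding S_def by blast
  have "sqrt (real (Ldim X Y A)) \<le> Inf S"
  proof (rule cInf_greatest[OF ne])
    fix z assume "z \<in> S"
    then obtain k U V where "z = row_norm X k U * col_norm Y k V" "is_factorization X Y A k U V"
      unfolding S_def by blast
    then show "sqrt (real (Ldim X Y A)) \<le> z" using key[OF assms(1-4) _ mt sh] by simp
  qed
  then show ?thesis unfolding gamma2_def S_def .
qed

end
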